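(* Consider an elimination path of length $\ell$ accessed by some set of processes, against any adversary. Then at most one process wins, and in any execution in which at least one process accesses the path and all accessing processes complete, not all of them lose. Moreover, if $k\le\ell$ processes access the elimination path, then no process visits a node with index $j>k$, and no process falls off the path.
   Context: Deterministic splitter: an object with a one-time operation $\mathrm{split}()$ returning $\mathrm{stop}$, $\mathrm{left}$ or $\mathrm{right}$, such that if $m\ge1$ processes call it, at most one stops, at most $m-1$ turn left and at most $m-1$ turn right (so a lone caller stops); moreover a process that stops or turns right invoked $\mathrm{split}()$ before any other $\mathrm{split}()$ call on the same object responded. A 2-process TAS object supports $\mathrm{TAS}(i)$, $i\in\{1,2\}$, called by at most two processes with distinct $i$; it returns $0$ (win) to at most one caller, and to exactly one if both complete (and to a lone caller). Elimination path of length $\ell$: nodes $1,\dots,\ell$, node $i$ holding a deterministic splitter $S_i$ and a 2-process TAS object $T_i$. A process enters at node $1$. At node $i$ it calls $S_i.\mathrm{split}()$: if it turns left it loses and stops; if it turns right it moves to node $i+1$ if $i<\ell$, and falls off the path (taking no more steps in the path) if $i=\ell$; if it stops at $S_i$, it calls $T_i.\mathrm{TAS}(1)$ and then moves back toward node $1$: whenever it has won $T_j$ with $j>1$ it calls $T_{j-1}.\mathrm{TAS}(2)$; if it loses any of these TAS calls it loses. A process wins the elimination path if it wins $T_1$. *)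

theory Defs
  imports Main
begin

datatype sresp = Stop | Left | Right

(* Events of an execution: invocations and responses of operations on the
   objects of node i.  RespTAS p i True means TAS returned 0 (win). *)
datatype 'p event =
    InvSplit 'p nat
  | RespSplit 'p nat sresp
  | InvTAS 'p nat nat
  | RespTAS 'p nat bool

fun evp :: "'p event \<Rightarrow> 'p" where
  "evp (InvSplit p i) = p"
| "evp (RespSplit p i r) = p"
| "evp (InvTAS p i a) = p"
| "evp (RespTAS p i w) = p"

datatype pstate =
    AtSplit nat
  | WaitSplit nat
  | AtTas nat nat
  | WaitTas nat nat
  | Won | Lost | FellOff

fun pstep :: "nat \<Rightarrow> pstate \<Rightarrow> 'p event \<Rightarrow> pstate option" where
  "pstep l (AtSplit i) (InvSplit p j) = (if i = j then Some (WaitSplit i) else None)"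
| "pstep l (WaitSplit i) (RespSplit p j r) =
     (if i \<noteq> j then None else
      (case r of Left \<Rightarrow> Some Lost
               | Right \<Rightarrow> (if i < l then Some (AtSplit (Suc i)) else Some FellOff)
               | Stop \<Rightarrow> Some (AtTas i 1)))"
| "pstep l (AtTas i a) (InvTAS p j b) = (if i = j \<and> a = b then Some (WaitTas i a) else None)"
| "pstep l (WaitTas i a) (RespTAS p j w) =
     (if i \<noteq> j then None else
      (if w then (if i = 1 then Some Won else Some (AtTas (i - 1) 2)) else Some Lost))"
| "pstep l s e = None"

fun exec_from :: "nat \<Rightarrow> ('p \<Rightarrow> pstate) \<Rightarrow> 'p event list \<Rightarrow> ('p \<Rightarrow> pstate) option" where
  "exec_from l s [] = Some s"
| "exec_from l s (e # es) =
     (case pstep l (s (evp e)) e of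
        None \<Rightarrow> None
      | Some q \<Rightarrow> exec_from l (s(evp e := q)) es)"

definition exec :: "nat \<Rightarrow> 'p event list \<Rightarrow> ('p \<Rightarrow> pstate) option" where
  "exec l tr = exec_from l (\<lambda>_. AtSplit 1) tr"

definition accessing :: "'p event list \<Rightarrow> 'p set" where
  "accessing tr = {p. \<exists>e \<in> set tr. evp e = p}"

definition completed :: "pstate \<Rightarrow> bool" where
  "completed s \<longleftrightarrow> s = Won \<or> s = Lost \<or> s = FellOff"

fun node_of :: "pstate \<Rightarrow> nat option" where
  "node_of (AtSplit i) = Some i"
| "node_of (WaitSplit i) = Some i"
| "node_of (AtTas i a) = Some i"
| "node_of (WaitTas i a) = Some i"
| "node_of _ = None"

definition visits :: "nat \<Rightarrow> 'p event list \<Rightarrow> 'p \<Rightarrow> nat \<Rightarrow> bool" where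
  "visits l tr p j \<longleftrightarrow>
     (\<exists>n \<le> length tr. \<exists>s. exec l (take n tr) = Some s \<and> node_of (s p) = Some j)"

definition splitter_ok :: "nat \<Rightarrow> 'p event list \<Rightarrow> bool" where
  "splitter_ok i tr \<longleftrightarrow>
     (let m = card {p. InvSplit p i \<in> set tr} in
        card {p. RespSplit p i Stop \<in> set tr} \<le> 1
      \<and> card {p. RespSplit p i Left \<in> set tr} \<le> m - 1
      \<and> card {p. RespSplit p i Right \<in> set tr} \<le> m - 1
      \<and> (\<forall>c d p q r r'. c < length tr \<longrightarrow> d < length tr \<longrightarrow>
            tr ! c = InvSplit p i \<longrightarrow> RespSplit p i r \<in> set tr \<longrightarrow> r \<noteq> Left \<longrightarrow>
            tr ! d = RespSplit q i r' \<longrightarrow> q \<noteq> p \<longrightarrow> c < d))"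

definition tas_used_ok :: "nat \<Rightarrow> 'p event list \<Rightarrow> bool" where
  "tas_used_ok i tr \<longleftrightarrow>
     (\<forall>p a. InvTAS p i a \<in> set tr \<longrightarrow> a \<in> {1, 2})
   \<and> (\<forall>p q a b. InvTAS p i a \<in> set tr \<longrightarrow> InvTAS q i b \<in> set tr \<longrightarrow> p \<noteq> q \<longrightarrow> a \<noteq> b)
   \<and> (\<forall>p. length (filter (\<lambda>e. \<exists>a. e = InvTAS p i a) tr) \<le> 1)"

definition tas_ok :: "nat \<Rightarrow> 'p event list \<Rightarrow> bool" where
  "tas_ok i tr \<longleftrightarrow>
     (\<forall>p q. RespTAS p i True \<in> set tr \<longrightarrow> RespTAS q i True \<in> set tr \<longrightarrow> p = q)
   \<and> (((\<exists>p a. InvTAS p i a \<in> set tr) \<and>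
        (\<forall>p a. InvTAS p i a \<in> set tr \<longrightarrow> (\<exists>w. RespTAS p i w \<in> set tr)))
       \<longrightarrow> (\<exists>p. RespTAS p i True \<in> set tr))"

(* the adversary may choose any responses consistent with the object specifications *)
definition objects_ok :: "nat \<Rightarrow> 'p event list \<Rightarrow> bool" where
  "objects_ok l tr \<longleftrightarrow>
     (\<forall>i \<in> {1..l}. splitter_ok i tr \<and> (tas_used_ok i tr \<longrightarrow> tas_ok i tr))"

end

theory Submission
  imports Defs
begin

fun run :: "nat \<Rightarrow> pstate \<Rightarrow> 'p event list \<Rightarrow> pstate option" where
  "run l q [] = Some q"
| "run l q (e # es) = (case pstep l q e of None \<Rightarrow> None | Some q' \<Rightarrow> run l q' es)"

lemma run_append: "run l q (es @ [e]) = (case run l q es of None \<Rightarrow> None | Some q' \<Rightarrow> pstep l q' e)"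
  by (induction es arbitrary: q) (auto split: option.splits)

lemma exec_proj:
  "exec_from l s tr = Some s' \<Longrightarrow> run l (s p) (filter (\<lambda>e. evp e = p) tr) = Some (s' p)"
proof (induction tr arbitrary: s)
  case Nil thus ?case by simp
next
  case (Cons e tr)
  then obtain q where q: "pstep l (s (evp e)) e = Some q" and r: "exec_from l (s(evp e := q)) tr = Some s'"
    by (auto split: option.splits)
  from Cons.IH[OF r] have IH: "run l ((s(evp e := q)) p) (filter (\<lambda>e. evp e = p) tr) = Some (s' p)" .
  show ?case
  proof (cases "evp e = p")
    case True thus ?thesis using q IH by auto
  next
    case False thus ?thesis using IH by auto
  qed
qed

definition c1 :: "nat \<Rightarrow> 'p \<Rightarrow> 'p event list \<Rightarrow> pstate \<Rightarrow> bool" where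
  "c1 l p es q \<longleftrightarrow> (let E = set es in \<forall>j. InvSplit p j \<in> E \<longrightarrow> 1 \<le> j \<and> j \<le> l \<and> (j = 1 \<or> RespSplit p (j-1) Right \<in> E))"

definition c2 :: "nat \<Rightarrow> 'p \<Rightarrow> 'p event list \<Rightarrow> pstate \<Rightarrow> bool" where
  "c2 l p es q \<longleftrightarrow> (let E = set es in \<forall>j r. RespSplit p j r \<in> E \<longrightarrow> InvSplit p j \<in> E)"

definition c3 :: "nat \<Rightarrow> 'p \<Rightarrow> 'p event list \<Rightarrow> pstate \<Rightarrow> bool" where
  "c3 l p es q \<longleftrightarrow> (let E = set es in \<forall>i. RespSplit p i Right \<in> E \<longrightarrow> i < l \<longrightarrow> InvSplit p (Suc i) \<in> E \<or> q = AtSplit (Suc i))"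

definition c4 :: "nat \<Rightarrow> 'p \<Rightarrow> 'p event list \<Rightarrow> pstate \<Rightarrow> bool" where
  "c4 l p es q \<longleftrightarrow> (let E = set es in \<forall>i. RespSplit p i Right \<in> E \<longrightarrow> l \<le> i \<longrightarrow> q = FellOff)"

definition c5 :: "nat \<Rightarrow> 'p \<Rightarrow> 'p event list \<Rightarrow> pstate \<Rightarrow> bool" where
  "c5 l p es q \<longleftrightarrow> (let E = set es in \<forall>i. RespSplit p i Stop \<in> E \<longrightarrow> InvTAS p i 1 \<in> E \<or> q = AtTas i 1)"

definition c6 :: "nat \<Rightarrow> 'p \<Rightarrow> 'p event list \<Rightarrow> pstate \<Rightarrow> bool" where
  "c6 l p es q \<longleftrightarrow> (let E = set es in \<forall>i a. InvTAS p i a \<in> E \<longrightarrow> RespTAS p i True \<in> E \<or> RespTAS p i False \<in> E \<or> q = WaitTas i a)"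

definition c7 :: "nat \<Rightarrow> 'p \<Rightarrow> 'p event list \<Rightarrow> pstate \<Rightarrow> bool" where
  "c7 l p es q \<longleftrightarrow> (let E = set es in RespTAS p 1 True \<in> E \<longrightarrow> q = Won)"

definition c7b :: "nat \<Rightarrow> 'p \<Rightarrow> 'p event list \<Rightarrow> pstate \<Rightarrow> bool" where
  "c7b l p es q \<longleftrightarrow> (let E = set es in \<forall>i. RespTAS p i True \<in> E \<longrightarrow> i \<noteq> 1 \<longrightarrow> InvTAS p (i-1) 2 \<in> E \<or> q = AtTas (i-1) 2)"

definition c8 :: "nat \<Rightarrow> 'p \<Rightarrow> 'p event list \<Rightarrow> pstate \<Rightarrow> bool" where
  "c8 l p es q \<longleftrightarrow> (let E = set es in q = Won \<longrightarrow> RespTAS p 1 True \<in> E)"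

definition c9 :: "nat \<Rightarrow> 'p \<Rightarrow> 'p event list \<Rightarrow> pstate \<Rightarrow> bool" where
  "c9 l p es q \<longleftrightarrow> (let E = set es in \<forall>i a. InvTAS p i a \<in> E \<longrightarrow> 1 \<le> i \<and> i \<le> l \<and> (a = 1 \<and> RespSplit p i Stop \<in> E \<or> a = 2 \<and> RespTAS p (Suc i) True \<in> E))"

definition c10 :: "nat \<Rightarrow> 'p \<Rightarrow> 'p event list \<Rightarrow> pstate \<Rightarrow> bool" where
  "c10 l p es q \<longleftrightarrow> (let E = set es in \<forall>i w. RespTAS p i w \<in> E \<longrightarrow> InvTAS p i 1 \<in> E \<or> InvTAS p i 2 \<in> E)"

definition c11 :: "nat \<Rightarrow> 'p \<Rightarrow> 'p event list \<Rightarrow> pstate \<Rightarrow> bool" where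
  "c11 l p es q \<longleftrightarrow> (let E = set es in \<forall>e \<in> E. InvSplit p 1 \<in> E)"

definition c12 :: "nat \<Rightarrow> 'p \<Rightarrow> 'p event list \<Rightarrow> pstate \<Rightarrow> bool" where
  "c12 l p es q \<longleftrightarrow> (let E = set es in \<forall>j. InvSplit p j \<in> E \<longrightarrow> RespSplit p j Stop \<in> E \<or> RespSplit p j Left \<in> E \<or> RespSplit p j Right \<in> E \<or> q = WaitSplit j)"

definition c13 :: "nat \<Rightarrow> 'p \<Rightarrow> 'p event list \<Rightarrow> pstate \<Rightarrow> bool" where
  "c13 l p es q \<longleftrightarrow> (let E = set es in \<forall>j. node_of q = Some j \<longrightarrow> j = 1 \<or> (\<exists>j'. j \<le> Suc j' \<and> RespSplit p j' Right \<in> E))"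

definition c14 :: "nat \<Rightarrow> 'p \<Rightarrow> 'p event list \<Rightarrow> pstate \<Rightarrow> bool" where
  "c14 l p es q \<longleftrightarrow> (let E = set es in q = FellOff \<longrightarrow> RespSplit p l Right \<in> E)"

definition c15 :: "nat \<Rightarrow> 'p \<Rightarrow> 'p event list \<Rightarrow> pstate \<Rightarrow> bool" where
  "c15 l p es q \<longleftrightarrow> (let E = set es in \<forall>i. length (filter (\<lambda>e. \<exists>a. e = InvTAS p i a) es) \<le> 1)"

definition c16 :: "nat \<Rightarrow> 'p \<Rightarrow> 'p event list \<Rightarrow> pstate \<Rightarrow> bool" where
  "c16 l p es q \<longleftrightarrow> (let E = set es in \<forall>j. q = AtSplit j \<longrightarrow> 1 \<le> j \<and> j \<le> l \<and> (j = 1 \<or> RespSplit p (j-1) Right \<in> E))"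

definition c17 :: "nat \<Rightarrow> 'p \<Rightarrow> 'p event list \<Rightarrow> pstate \<Rightarrow> bool" where
  "c17 l p es q \<longleftrightarrow> (let E = set es in \<forall>j. q = WaitSplit j \<longrightarrow> InvSplit p j \<in> E)"

definition c18 :: "nat \<Rightarrow> 'p \<Rightarrow> 'p event list \<Rightarrow> pstate \<Rightarrow> bool" where
  "c18 l p es q \<longleftrightarrow> (let E = set es in \<forall>i a. q = AtTas i a \<longrightarrow> 1 \<le> i \<and> i \<le> l \<and> (a = 1 \<and> RespSplit p i Stop \<in> E \<or> a = 2 \<and> RespTAS p (Suc i) True \<in> E) \<and> (\<forall>j b. InvTAS p j b \<in> E \<longrightarrow> i < j))"

definition c19 :: "nat \<Rightarrow> 'p \<Rightarrow> 'p event list \<Rightarrow> pstate \<Rightarrow> bool" where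
  "c19 l p es q \<longleftrightarrow> (let E = set es in \<forall>i a. q = WaitTas i a \<longrightarrow> 1 \<le> i \<and> i \<le> l \<and> InvTAS p i a \<in> E \<and> (\<forall>j b. InvTAS p j b \<in> E \<longrightarrow> i \<le> j))"

definition c20 :: "nat \<Rightarrow> 'p \<Rightarrow> 'p event list \<Rightarrow> pstate \<Rightarrow> bool" where
  "c20 l p es q \<longleftrightarrow> (let E = set es in \<forall>j. (q = AtSplit j \<or> q = WaitSplit j) \<longrightarrow> (\<forall>i a. InvTAS p i a \<notin> E))"

definition Inv :: "nat \<Rightarrow> 'p \<Rightarrow> 'p event list \<Rightarrow> pstate \<Rightarrow> bool" where
  "Inv l p es q \<longleftrightarrow> c1 l p es q \<and> c2 l p es q \<and> c3 l p es q \<and> c4 l p es q \<and> c5 l p es q \<and> c6 l p es q \<and> c7 l p es q \<and> c7b l p es q \<and> c8 l p es q \<and> c9 l p es q \<and> c10 l p es q \<and> c11 l p es q \<and> c12 l p es q \<and> c13 l p es q \<and> c14 l p es q \<and> c15 l p es q \<and> c16 l p es q \<and> c17 l p es q \<and> c18 l p es q \<and> c19 l p es q \<and> c20 l p es q"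

lemma filter_zero: "(\<forall>b. InvTAS p i b \<notin> set es) \<Longrightarrow> length (filter (\<lambda>e. \<exists>a. e = InvTAS p i a) es) = 0"
  by (induction es) auto

lemma filter_nil: "(\<forall>j b. InvTAS p j b \<in> set es \<longrightarrow> i < j) \<Longrightarrow> filter (\<lambda>e. \<exists>a. e = InvTAS p i a) es = []"
  by (induction es) auto

lemma Inv_init: "l \<ge> 1 \<Longrightarrow> Inv l p [] (AtSplit 1)"
  by (simp add: Inv_def c1_def c2_def c3_def c4_def c5_def c6_def c7_def c7b_def c8_def c9_def c10_def c11_def c12_def c13_def c14_def c15_def c16_def c17_def c18_def c19_def c20_def)

lemma c1_step: "c1 l p es q \<Longrightarrow> c16 l p es q \<Longrightarrow> pstep l q e = Some q' \<Longrightarrow> evp e = p \<Longrightarrow> c1 l p (es @ [e]) q'"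
  by (cases q; cases e) (auto simp: c1_def c16_def Let_def split: if_splits sresp.splits)

lemma c2_step: "c2 l p es q \<Longrightarrow> c17 l p es q \<Longrightarrow> pstep l q e = Some q' \<Longrightarrow> evp e = p \<Longrightarrow> c2 l p (es @ [e]) q'"
  by (cases q; cases e) (auto simp: c2_def c17_def Let_def split: if_splits sresp.splits)

lemma c3_step: "c3 l p es q \<Longrightarrow> pstep l q e = Some q' \<Longrightarrow> evp e = p \<Longrightarrow> c3 l p (es @ [e]) q'"
  by (cases q; cases e) (auto simp: c3_def Let_def split: if_splits sresp.splits)

lemma c4_step: "c4 l p es q \<Longrightarrow> pstep l q e = Some q' \<Longrightarrow> evp e = p \<Longrightarrow> c4 l p (es @ [e]) q'"
  by (cases q; cases e) (auto simp: c4_def Let_def split: if_splits sresp.splits)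

lemma c5_step: "c5 l p es q \<Longrightarrow> pstep l q e = Some q' \<Longrightarrow> evp e = p \<Longrightarrow> c5 l p (es @ [e]) q'"
  by (cases q; cases e) (auto simp: c5_def Let_def split: if_splits sresp.splits)

lemma c6_step: "c6 l p es q \<Longrightarrow> pstep l q e = Some q' \<Longrightarrow> evp e = p \<Longrightarrow> c6 l p (es @ [e]) q'"
  by (cases q; cases e) (auto simp: c6_def Let_def split: if_splits sresp.splits)

lemma c7_step: "c7 l p es q \<Longrightarrow> pstep l q e = Some q' \<Longrightarrow> evp e = p \<Longrightarrow> c7 l p (es @ [e]) q'"
  by (cases q; cases e) (auto simp: c7_def Let_def split: if_splits sresp.splits)

lemma c7b_step: "c7b l p es q \<Longrightarrow> pstep l q e = Some q' \<Longrightarrow> evp e = p \<Longrightarrow> c7b l p (es @ [e]) q'"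
  by (cases q; cases e) (auto simp: c7b_def Let_def split: if_splits sresp.splits)

lemma c8_step: "c8 l p es q \<Longrightarrow> pstep l q e = Some q' \<Longrightarrow> evp e = p \<Longrightarrow> c8 l p (es @ [e]) q'"
  by (cases q; cases e) (auto simp: c8_def Let_def split: if_splits sresp.splits)

lemma c9_step: "c9 l p es q \<Longrightarrow> c18 l p es q \<Longrightarrow> pstep l q e = Some q' \<Longrightarrow> evp e = p \<Longrightarrow> c9 l p (es @ [e]) q'"
  by (cases q; cases e) (auto simp: c9_def c18_def Let_def split: if_splits sresp.splits)

lemma c10_step: "c10 l p es q \<Longrightarrow> c19 l p es q \<Longrightarrow> c9 l p es q \<Longrightarrow> pstep l q e = Some q' \<Longrightarrow> evp e = p \<Longrightarrow> c10 l p (es @ [e]) q'"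
  by (cases q; cases e) (auto simp: c10_def c19_def c9_def Let_def split: if_splits sresp.splits)

lemma c11_step: "c11 l p es q \<Longrightarrow> c16 l p es q \<Longrightarrow> c17 l p es q \<Longrightarrow> c18 l p es q \<Longrightarrow> c19 l p es q \<Longrightarrow> pstep l q e = Some q' \<Longrightarrow> evp e = p \<Longrightarrow> c11 l p (es @ [e]) q'"
  by (cases q; cases e) (auto simp: c11_def c16_def c17_def c18_def c19_def Let_def split: if_splits sresp.splits)

lemma c12_step: "c12 l p es q \<Longrightarrow> pstep l q e = Some q' \<Longrightarrow> evp e = p \<Longrightarrow> c12 l p (es @ [e]) q'"
  by (cases q; cases e) (auto simp: c12_def Let_def split: if_splits sresp.splits)

lemma c13_aux: "pstep l q e = Some q' \<Longrightarrow> node_of q' = Some j \<Longrightarrow>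
   (\<exists>i. node_of q = Some i \<and> j \<le> i \<and> (i = 1 \<longrightarrow> j = 1)) \<or> (\<exists>j'. j = Suc j' \<and> e = RespSplit (evp e) j' Right)"
  by (cases q; cases e) (auto split: if_splits sresp.splits)

lemma c13_step:
  assumes "c13 l p es q" "pstep l q e = Some q'" "evp e = p"
  shows "c13 l p (es @ [e]) q'"
  unfolding c13_def Let_def
proof (intro allI impI)
  fix j assume nj: "node_of q' = Some j"
  from c13_aux[OF assms(2) nj]
  show "j = 1 \<or> (\<exists>j'. j \<le> Suc j' \<and> RespSplit p j' Right \<in> set (es @ [e]))"
  proof
    assume "\<exists>i. node_of q = Some i \<and> j \<le> i \<and> (i = 1 \<longrightarrow> j = 1)"
    then obtain i where i: "node_of q = Some i" "j \<le> i" "i = 1 \<longrightarrow> j = 1" by blast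
    from assms(1) i(1) have "i = 1 \<or> (\<exists>j'. i \<le> Suc j' \<and> RespSplit p j' Right \<in> set es)"
      by (simp add: c13_def)
    thus ?thesis
    proof
      assume "i = 1" thus ?thesis using i by simp
    next
      assume "\<exists>j'. i \<le> Suc j' \<and> RespSplit p j' Right \<in> set es"
      then obtain j' where "i \<le> Suc j'" "RespSplit p j' Right \<in> set es" by blast
      hence "j \<le> Suc j' \<and> RespSplit p j' Right \<in> set (es @ [e])" using i(2) by simp
      thus ?thesis by blast
    qed
  next
    assume "\<exists>j'. j = Suc j' \<and> e = RespSplit (evp e) j' Right"
    thus ?thesis using assms(3) by auto
  qed
qed

lemma c14_step: "c14 l p es q \<Longrightarrow> c17 l p es q \<Longrightarrow> c1 l p es q \<Longrightarrow> pstep l q e = Some q' \<Longrightarrow> evp e = p \<Longrightarrow> c14 l p (es @ [e]) q'"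
  by (cases q; cases e) (auto simp: c14_def c17_def c1_def Let_def split: if_splits sresp.splits)

lemma c15_step: "c15 l p es q \<Longrightarrow> c18 l p es q \<Longrightarrow> pstep l q e = Some q' \<Longrightarrow> evp e = p \<Longrightarrow> c15 l p (es @ [e]) q'"
  by (cases q; cases e) (auto simp: c15_def c18_def Let_def filter_nil split: if_splits sresp.splits)

lemma c16_step: "c16 l p es q \<Longrightarrow> pstep l q e = Some q' \<Longrightarrow> evp e = p \<Longrightarrow> c16 l p (es @ [e]) q'"
  by (cases q; cases e) (auto simp: c16_def Let_def split: if_splits sresp.splits)

lemma c17_step: "c17 l p es q \<Longrightarrow> pstep l q e = Some q' \<Longrightarrow> evp e = p \<Longrightarrow> c17 l p (es @ [e]) q'"
  by (cases q; cases e) (auto simp: c17_def Let_def split: if_splits sresp.splits)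

lemma c18_wait:
  assumes h19: "c19 l p es (WaitTas i a)" and hst: "pstep l (WaitTas i a) e = Some q'" and ev: "evp e = p"
  shows "c18 l p (es @ [e]) q'"
proof -
  have i1: "1 \<le> i" "i \<le> l" and ge: "\<forall>j b. InvTAS p j b \<in> set es \<longrightarrow> i \<le> j"
    using h19 by (simp_all add: c19_def Let_def)
  obtain p' j w where RespTAS: "e = RespTAS p' j w" using hst by (cases e) auto
  show ?thesis
  proof (cases "w \<and> i \<noteq> 1")
    case True
    hence q': "q' = AtTas (i - 1) 2" and ij: "j = i" and w: w using hst RespTAS by (auto split: if_splits)
    have "Suc (i - 1) = i" using i1 by simp
    thus ?thesis using q' ij w i1 True ge RespTAS ev by (auto simp: c18_def Let_def)
  next
    case False
    hence "q' = Won \<or> q' = Lost" using hst RespTAS by (auto split: if_splits)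
    thus ?thesis by (auto simp: c18_def)
  qed
qed

lemma c18_step: "c18 l p es q \<Longrightarrow> c17 l p es q \<Longrightarrow> c1 l p es q \<Longrightarrow> c20 l p es q \<Longrightarrow> c19 l p es q \<Longrightarrow> c9 l p es q \<Longrightarrow> pstep l q e = Some q' \<Longrightarrow> evp e = p \<Longrightarrow> c18 l p (es @ [e]) q'"
  apply (cases "\<exists>i a. q = WaitTas i a")
   apply (blast intro: c18_wait)
  by (cases q; cases e) (auto simp: c18_def c17_def c1_def c20_def c9_def Let_def split: if_splits sresp.splits)

lemma c19_step: "c19 l p es q \<Longrightarrow> c18 l p es q \<Longrightarrow> pstep l q e = Some q' \<Longrightarrow> evp e = p \<Longrightarrow> c19 l p (es @ [e]) q'"
  by (cases q; cases e) (auto simp: c19_def c18_def Let_def split: if_splits sresp.splits)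

lemma c20_step: "c20 l p es q \<Longrightarrow> pstep l q e = Some q' \<Longrightarrow> evp e = p \<Longrightarrow> c20 l p (es @ [e]) q'"
  by (cases q; cases e) (auto simp: c20_def Let_def split: if_splits sresp.splits)

lemma Inv_step:
  assumes inv: "Inv l p es q" and st: "pstep l q e = Some q'" and ev: "evp e = p"
  shows "Inv l p (es @ [e]) q'"
proof -
  have h_c1: "c1 l p es q" using inv by (simp add: Inv_def)
  have h_c2: "c2 l p es q" using inv by (simp add: Inv_def)
  have h_c3: "c3 l p es q" using inv by (simp add: Inv_def)
  have h_c4: "c4 l p es q" using inv by (simp add: Inv_def)
  have h_c5: "c5 l p es q" using inv by (simp add: Inv_def)
  have h_c6: "c6 l p es q" using inv by (simp add: Inv_def)
  have h_c7: "c7 l p es q" using inv by (simp add: Inv_def)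
  have h_c7b: "c7b l p es q" using inv by (simp add: Inv_def)
  have h_c8: "c8 l p es q" using inv by (simp add: Inv_def)
  have h_c9: "c9 l p es q" using inv by (simp add: Inv_def)
  have h_c10: "c10 l p es q" using inv by (simp add: Inv_def)
  have h_c11: "c11 l p es q" using inv by (simp add: Inv_def)
  have h_c12: "c12 l p es q" using inv by (simp add: Inv_def)
  have h_c13: "c13 l p es q" using inv by (simp add: Inv_def)
  have h_c14: "c14 l p es q" using inv by (simp add: Inv_def)
  have h_c15: "c15 l p es q" using inv by (simp add: Inv_def)
  have h_c16: "c16 l p es q" using inv by (simp add: Inv_def)
  have h_c17: "c17 l p es q" using inv by (simp add: Inv_def)
  have h_c18: "c18 l p es q" using inv by (simp add: Inv_def)
  have h_c19: "c19 l p es q" using inv by (simp add: Inv_def)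
  have h_c20: "c20 l p es q" using inv by (simp add: Inv_def)
  have n_c1: "c1 l p (es @ [e]) q'" by (rule c1_step[OF h_c1 h_c16 st ev])
  have n_c2: "c2 l p (es @ [e]) q'" by (rule c2_step[OF h_c2 h_c17 st ev])
  have n_c3: "c3 l p (es @ [e]) q'" by (rule c3_step[OF h_c3 st ev])
  have n_c4: "c4 l p (es @ [e]) q'" by (rule c4_step[OF h_c4 st ev])
  have n_c5: "c5 l p (es @ [e]) q'" by (rule c5_step[OF h_c5 st ev])
  have n_c6: "c6 l p (es @ [e]) q'" by (rule c6_step[OF h_c6 st ev])
  have n_c7: "c7 l p (es @ [e]) q'" by (rule c7_step[OF h_c7 st ev])
  have n_c7b: "c7b l p (es @ [e]) q'" by (rule c7b_step[OF h_c7b st ev])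
  have n_c8: "c8 l p (es @ [e]) q'" by (rule c8_step[OF h_c8 st ev])
  have n_c9: "c9 l p (es @ [e]) q'" by (rule c9_step[OF h_c9 h_c18 st ev])
  have n_c10: "c10 l p (es @ [e]) q'" by (rule c10_step[OF h_c10 h_c19 h_c9 st ev])
  have n_c11: "c11 l p (es @ [e]) q'" by (rule c11_step[OF h_c11 h_c16 h_c17 h_c18 h_c19 st ev])
  have n_c12: "c12 l p (es @ [e]) q'" by (rule c12_step[OF h_c12 st ev])
  have n_c13: "c13 l p (es @ [e]) q'" by (rule c13_step[OF h_c13 st ev])
  have n_c14: "c14 l p (es @ [e]) q'" by (rule c14_step[OF h_c14 h_c17 h_c1 st ev])
  have n_c15: "c15 l p (es @ [e]) q'" by (rule c15_step[OF h_c15 h_c18 st ev])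
  have n_c16: "c16 l p (es @ [e]) q'" by (rule c16_step[OF h_c16 st ev])
  have n_c17: "c17 l p (es @ [e]) q'" by (rule c17_step[OF h_c17 st ev])
  have n_c18: "c18 l p (es @ [e]) q'" by (rule c18_step[OF h_c18 h_c17 h_c1 h_c20 h_c19 h_c9 st ev])
  have n_c19: "c19 l p (es @ [e]) q'" by (rule c19_step[OF h_c19 h_c18 st ev])
  have n_c20: "c20 l p (es @ [e]) q'" by (rule c20_step[OF h_c20 st ev])
  show ?thesis unfolding Inv_def using n_c1 n_c2 n_c3 n_c4 n_c5 n_c6 n_c7 n_c7b n_c8 n_c9 n_c10 n_c11 n_c12 n_c13 n_c14 n_c15 n_c16 n_c17 n_c18 n_c19 n_c20 by (intro conjI)
qed

lemma Inv_run:
  assumes "l \<ge> 1" "\<forall>e \<in> set es. evp e = p" "run l (AtSplit 1) es = Some q"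
  shows "Inv l p es q"
  using assms(2,3)
proof (induction es arbitrary: q rule: rev_induct)
  case Nil thus ?case using Inv_init[OF assms(1)] by simp
next
  case (snoc e es)
  from snoc.prems(2) obtain q0 where q0: "run l (AtSplit 1) es = Some q0" and st: "pstep l q0 e = Some q"
    by (auto simp: run_append split: option.splits)
  have "Inv l p es q0" using snoc.IH[OF _ q0] snoc.prems(1) by simp
  thus ?case using Inv_step[OF _ st, of p es] snoc.prems(1) by simp
qed

lemma Inv_tr:
  assumes "l \<ge> 1" "exec l tr = Some st"
  shows "Inv l p (filter (\<lambda>e. evp e = p) tr) (st p)"
proof -
  have "run l (AtSplit 1) (filter (\<lambda>e. evp e = p) tr) = Some (st p)"
    using exec_proj[of l "\<lambda>_. AtSplit 1" tr st p] assms(2) by (simp add: exec_def)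
  thus ?thesis using Inv_run[OF assms(1), of "filter (\<lambda>e. evp e = p) tr" p] by simp
qed

context
  fixes l :: nat and tr :: "'p event list" and st :: "'p \<Rightarrow> pstate"
  assumes l1: "l \<ge> 1" and ex: "exec l tr = Some st"
begin

lemma I: "Inv l p (filter (\<lambda>e. evp e = p) tr) (st p)"
  using Inv_tr[OF l1 ex] .

lemma F1: "InvSplit p j \<in> set tr \<Longrightarrow> 1 \<le> j \<and> j \<le> l \<and> (j = 1 \<or> RespSplit p (j-1) Right \<in> set tr)"
  using I[of p] unfolding Inv_def c1_def Let_def by simp
lemma F2: "RespSplit p j r \<in> set tr \<Longrightarrow> InvSplit p j \<in> set tr"
  using I[of p] unfolding Inv_def c2_def Let_def by (simp; blast)
lemma F3: "RespSplit p i Right \<in> set tr \<Longrightarrow> i < l \<Longrightarrow> InvSplit p (Suc i) \<in> set tr \<or> st p = AtSplit (Suc i)"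
  using I[of p] unfolding Inv_def c3_def Let_def by simp
lemma F4: "RespSplit p i Right \<in> set tr \<Longrightarrow> l \<le> i \<Longrightarrow> st p = FellOff"
  using I[of p] unfolding Inv_def c4_def Let_def by simp
lemma F5: "RespSplit p i Stop \<in> set tr \<Longrightarrow> InvTAS p i 1 \<in> set tr \<or> st p = AtTas i 1"
  using I[of p] unfolding Inv_def c5_def Let_def by simp
lemma F6: "InvTAS p i a \<in> set tr \<Longrightarrow> RespTAS p i True \<in> set tr \<or> RespTAS p i False \<in> set tr \<or> st p = WaitTas i a"
  using I[of p] unfolding Inv_def c6_def Let_def by simp
lemma F7: "RespTAS p 1 True \<in> set tr \<Longrightarrow> st p = Won"
  using I[of p] unfolding Inv_def c7_def Let_def by simp
lemma F8: "RespTAS p i True \<in> set tr \<Longrightarrow> i \<noteq> 1 \<Longrightarrow> InvTAS p (i-1) 2 \<in> set tr \<or> st p = AtTas (i-1) 2"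
  using I[of p] unfolding Inv_def c7b_def Let_def by simp
lemma F9: "st p = Won \<Longrightarrow> RespTAS p 1 True \<in> set tr"
  using I[of p] unfolding Inv_def c8_def Let_def by simp
lemma F10: "InvTAS p i a \<in> set tr \<Longrightarrow> 1 \<le> i \<and> i \<le> l \<and> (a = 1 \<and> RespSplit p i Stop \<in> set tr \<or> a = 2 \<and> RespTAS p (Suc i) True \<in> set tr)"
  using I[of p] unfolding Inv_def c9_def Let_def by simp
lemma F11: "RespTAS p i w \<in> set tr \<Longrightarrow> InvTAS p i 1 \<in> set tr \<or> InvTAS p i 2 \<in> set tr"
  using I[of p] unfolding Inv_def c10_def Let_def by (simp; blast)
lemma F12: "e \<in> set tr \<Longrightarrow> InvSplit (evp e) 1 \<in> set tr"
  using I[of "evp e"] unfolding Inv_def c11_def Let_def by (simp; blast)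
lemma F13: "InvSplit p j \<in> set tr \<Longrightarrow> RespSplit p j Stop \<in> set tr \<or> RespSplit p j Left \<in> set tr \<or> RespSplit p j Right \<in> set tr \<or> st p = WaitSplit j"
  using I[of p] unfolding Inv_def c12_def Let_def by simp
lemma F14: "st p = FellOff \<Longrightarrow> RespSplit p l Right \<in> set tr"
  using I[of p] unfolding Inv_def c14_def Let_def by simp
lemma F15: "length (filter (\<lambda>e. \<exists>a. e = InvTAS p i a) tr) \<le> 1"
proof -
  have "length (filter (\<lambda>e. \<exists>a. e = InvTAS p i a) (filter (\<lambda>e. evp e = p) tr)) \<le> 1"
    using I[of p] unfolding Inv_def c15_def Let_def by simp
  moreover have "filter (\<lambda>e. \<exists>a. e = InvTAS p i a) (filter (\<lambda>e. evp e = p) tr) = filter (\<lambda>e. \<exists>a. e = InvTAS p i a) tr"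
    by (induction tr) auto
  ultimately show ?thesis by simp
qed
lemma F16: "node_of (st p) = Some j \<Longrightarrow> j = 1 \<or> (\<exists>j'. j \<le> Suc j' \<and> RespSplit p j' Right \<in> set tr)"
  using I[of p] unfolding Inv_def c13_def Let_def by simp
lemma F17: "p \<notin> accessing tr \<Longrightarrow> st p = AtSplit 1"
proof -
  assume "p \<notin> accessing tr"
  hence "filter (\<lambda>e. evp e = p) tr = []" by (auto simp: accessing_def filter_empty_conv)
  thus ?thesis using exec_proj[of l "\<lambda>_. AtSplit 1" tr st p] ex by (simp add: exec_def)
qed

end

lemma fin_ev: "finite {p. f p \<in> set tr}" if "\<And>p. evp (f p) = p" for f :: "'p \<Rightarrow> 'p event"
proof (rule finite_subset[of _ "evp ` set tr"])
  show "{p. f p \<in> set tr} \<subseteq> evp ` set tr"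
  proof
    fix p assume "p \<in> {p. f p \<in> set tr}"
    hence "f p \<in> set tr" by simp
    hence "evp (f p) \<in> evp ` set tr" by (rule imageI)
    thus "p \<in> evp ` set tr" using that by simp
  qed
qed simp

lemma card_le1_eq: "finite A \<Longrightarrow> card A \<le> 1 \<Longrightarrow> x \<in> A \<Longrightarrow> y \<in> A \<Longrightarrow> x = y"
  by (metis One_nat_def card_le_Suc0_iff_eq)

lemma spl_facts:
  assumes "splitter_ok i tr"
  shows "card {p. RespSplit p i Stop \<in> set tr} \<le> 1"
    "card {p. RespSplit p i Left \<in> set tr} \<le> card {p. InvSplit p i \<in> set tr} - 1"
    "card {p. RespSplit p i Right \<in> set tr} \<le> card {p. InvSplit p i \<in> set tr} - 1"
  using assms unfolding splitter_ok_def Let_def by simp_all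

theorem lemma7:
  fixes l :: nat and tr :: "'p event list" and st :: "'p \<Rightarrow> pstate"
  assumes "l \<ge> 1"
    and "exec l tr = Some st"
    and "objects_ok l tr"
  shows "(\<forall>p q. st p = Won \<longrightarrow> st q = Won \<longrightarrow> p = q)
       \<and> (accessing tr \<noteq> {} \<and> (\<forall>p \<in> accessing tr. completed (st p))
           \<longrightarrow> (\<exists>p \<in> accessing tr. st p \<noteq> Lost))
       \<and> (card (accessing tr) \<le> l \<longrightarrow>
           (\<forall>p \<in> accessing tr. \<forall>j. visits l tr p j \<longrightarrow> j \<le> card (accessing tr))
         \<and> (\<forall>p. st p \<noteq> FellOff))"
proof -
  note l1 = assms(1) and ex = assms(2)
  have spl: "splitter_ok i tr" if "1 \<le> i" "i \<le> l" for i
    using assms(3) that by (simp add: objects_ok_def)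
  have tasok: "tas_ok i tr" if "1 \<le> i" "i \<le> l" "tas_used_ok i tr" for i
    using assms(3) that by (simp add: objects_ok_def)
  have finI: "finite {p. InvSplit p i \<in> set tr}" for i by (rule fin_ev) simp
  have finR: "finite {p. RespSplit p i r \<in> set tr}" for i r by (rule fin_ev) simp
  have accI: "evp e \<in> accessing tr" if "e \<in> set tr" for e
    using that unfolding accessing_def by blast
  have finA: "finite (accessing tr)"
  proof (rule finite_subset[of _ "evp ` set tr"])
    show "accessing tr \<subseteq> evp ` set tr" unfolding accessing_def by blast
  qed simp
  have used: "tas_used_ok i tr" if "1 \<le> i" "i \<le> l" for i
    using that
  proof (induction "l - i" arbitrary: i rule: less_induct)
    case less
    show ?case unfolding tas_used_ok_def
    proof (intro conjI allI impI)
      fix p a assume h: "InvTAS p i a \<in> set tr"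
      show "a \<in> {1, 2}" using F10[OF l1 ex h] by auto
    next
      fix p q a b assume pa: "InvTAS p i a \<in> set tr" and qb: "InvTAS q i b \<in> set tr" and pq: "p \<noteq> q"
      show "a \<noteq> b"
      proof
        assume ab: "a = b"
        from F10[OF l1 ex pa] F10[OF l1 ex qb] ab
        have "(RespSplit p i Stop \<in> set tr \<and> RespSplit q i Stop \<in> set tr)
            \<or> (RespTAS p (Suc i) True \<in> set tr \<and> RespTAS q (Suc i) True \<in> set tr)" by auto
        thus False
        proof
          assume h: "RespSplit p i Stop \<in> set tr \<and> RespSplit q i Stop \<in> set tr"
          have c: "card {p. RespSplit p i Stop \<in> set tr} \<le> 1"
            using spl_facts(1)[OF spl[OF less.prems]] .
          have "p = q" using card_le1_eq[OF finR c, of p q] h by simp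
          thus False using pq by simp
        next
          assume h: "RespTAS p (Suc i) True \<in> set tr \<and> RespTAS q (Suc i) True \<in> set tr"
          hence "InvTAS p (Suc i) 1 \<in> set tr \<or> InvTAS p (Suc i) 2 \<in> set tr" using F11[OF l1 ex] by blast
          hence si: "Suc i \<le> l" using F10[OF l1 ex] by blast
          have "tas_used_ok (Suc i) tr" using less.hyps[of "Suc i"] less.prems si by simp
          hence "tas_ok (Suc i) tr" using tasok si by simp
          hence "p = q" using h unfolding tas_ok_def by blast
          thus False using pq by simp
        qed
      qed
    next
      fix p show "length (filter (\<lambda>e. \<exists>a. e = InvTAS p i a) tr) \<le> 1" using F15[OF l1 ex] .
    qed
  qed
  have tok: "tas_ok i tr" if "1 \<le> i" "i \<le> l" for i using tasok[OF that used[OF that]] .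
  have P1: "\<forall>p q. st p = Won \<longrightarrow> st q = Won \<longrightarrow> p = q"
  proof (intro allI impI)
    fix p q assume "st p = Won" "st q = Won"
    hence "RespTAS p 1 True \<in> set tr" "RespTAS q 1 True \<in> set tr" using F9[OF l1 ex] by auto
    thus "p = q" using tok[OF order_refl l1] unfolding tas_ok_def by blast
  qed
  have P2: "\<exists>p \<in> accessing tr. st p \<noteq> Lost"
    if ne: "accessing tr \<noteq> {}"
  proof (rule ccontr)
    assume "\<not> (\<exists>p \<in> accessing tr. st p \<noteq> Lost)"
    hence lost: "st p = Lost" if "p \<in> accessing tr" for p using that by blast
    have lostE: "st (evp e) = Lost" if "e \<in> set tr" for e using lost[OF accI[OF that]] .
    have lI: "st p = Lost" if "InvSplit p j \<in> set tr" for p j using lostE[OF that] by simp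
    have lR: "st p = Lost" if "RespSplit p j r \<in> set tr" for p j r using lostE[OF that] by simp
    have lT: "st p = Lost" if "InvTAS p j a \<in> set tr" for p j a using lostE[OF that] by simp
    have lW: "st p = Lost" if "RespTAS p j w \<in> set tr" for p j w using lostE[OF that] by simp
    define S where "S = {i \<in> {1..l}. \<exists>p. InvSplit p i \<in> set tr}"
    obtain p0 where "p0 \<in> accessing tr" using ne by blast
    then obtain e0 where e0: "e0 \<in> set tr" "evp e0 = p0" unfolding accessing_def by blast
    have "InvSplit p0 1 \<in> set tr" using F12[OF l1 ex e0(1)] e0(2) by simp
    hence S1: "1 \<in> S" using l1 unfolding S_def by auto
    have finS: "finite S" unfolding S_def by simp
    define j where "j = Max S"
    have jS: "j \<in> S" unfolding j_def using S1 finS Max_in by blast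
    have jmax: "i \<le> j" if "i \<in> S" for i unfolding j_def using finS that by simp
    have j1: "1 \<le> j" "j \<le> l" using jS unfolding S_def by auto
    obtain pj where pj: "InvSplit pj j \<in> set tr" using jS unfolding S_def by blast
    have "\<exists>p. RespSplit p j Stop \<in> set tr"
    proof (rule ccontr)
      assume nost: "\<nexists>p. RespSplit p j Stop \<in> set tr"
      have sub: "{p. InvSplit p j \<in> set tr} \<subseteq> {p. RespSplit p j Left \<in> set tr}"
      proof
        fix p assume "p \<in> {p. InvSplit p j \<in> set tr}"
        hence pI: "InvSplit p j \<in> set tr" by simp
        have "RespSplit p j Right \<notin> set tr"
        proof
          assume r: "RespSplit p j Right \<in> set tr"
          show False
          proof (cases "j < l")
            case True
            have "st p = Lost" using lR[OF r] .
            hence "InvSplit p (Suc j) \<in> set tr" using F3[OF l1 ex r True] by auto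
            hence "Suc j \<in> S" using True unfolding S_def by auto
            thus False using jmax[of "Suc j"] by simp
          next
            case False thus False using F4[OF l1 ex r] lR[OF r] by auto
          qed
        qed
        thus "p \<in> {p. RespSplit p j Left \<in> set tr}"
          using F13[OF l1 ex pI] nost lI[OF pI] by auto
      qed
      have "card {p. RespSplit p j Left \<in> set tr} \<le> card {p. InvSplit p j \<in> set tr} - 1"
        using spl_facts(2)[OF spl[OF j1]] .
      moreover have "card {p. InvSplit p j \<in> set tr} \<le> card {p. RespSplit p j Left \<in> set tr}"
        using card_mono[OF finR sub] .
      moreover have "card {p. InvSplit p j \<in> set tr} > 0"
        using pj finI[of j] by (auto simp: card_gt_0_iff)
      ultimately show False by linarith
    qed
    then obtain p1 where p1: "RespSplit p1 j Stop \<in> set tr" by blast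
    have inv1: "InvTAS p1 j 1 \<in> set tr" using F5[OF l1 ex p1] lR[OF p1] by auto
    have win: "\<exists>p. RespTAS p 1 True \<in> set tr"
      if "1 \<le> i" "i \<le> l" "InvTAS p i a \<in> set tr" for i p a
      using that
    proof (induction i arbitrary: p a rule: less_induct)
      case (less i)
      have allr: "\<forall>p a. InvTAS p i a \<in> set tr \<longrightarrow> (\<exists>w. RespTAS p i w \<in> set tr)"
      proof (intro allI impI)
        fix p a assume h: "InvTAS p i a \<in> set tr"
        show "\<exists>w. RespTAS p i w \<in> set tr" using F6[OF l1 ex h] lT[OF h] by auto
      qed
      have "\<exists>p a. InvTAS p i a \<in> set tr" using less.prems(3) by blast
      with tok[OF less.prems(1,2)] allr obtain w where w: "RespTAS w i True \<in> set tr"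
        unfolding tas_ok_def by blast
      show ?case
      proof (cases "i = 1")
        case True thus ?thesis using w by blast
      next
        case False
        have "st w = Lost" using lW[OF w] .
        hence iv: "InvTAS w (i-1) 2 \<in> set tr" using F8[OF l1 ex w False] by auto
        have "1 \<le> i - 1" using False less.prems(1) by simp
        moreover have "i - 1 < i" "i - 1 \<le> l" using less.prems(1,2) by auto
        ultimately show ?thesis using less.IH[OF _ _ _ iv] by blast
      qed
    qed
    obtain pw where pw: "RespTAS pw 1 True \<in> set tr" using win[OF j1 inv1] by blast
    have "st pw = Won" using F7[OF l1 ex pw] .
    thus False using lW[OF pw] by simp
  qed
  define k where "k = card (accessing tr)"
  define m where "m i = card {p. InvSplit p i \<in> set tr}" for i
  define R where "R i = card {p. RespSplit p i Right \<in> set tr}" for i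
  have P3: "(\<forall>p \<in> accessing tr. \<forall>j. visits l tr p j \<longrightarrow> j \<le> k) \<and> (\<forall>p. st p \<noteq> FellOff)"
    if kl: "k \<le> l"
  proof -
    have m1: "m 1 \<le> k" unfolding m_def k_def
    proof (rule card_mono[OF finA])
      show "{p. InvSplit p 1 \<in> set tr} \<subseteq> accessing tr"
      proof
        fix x assume "x \<in> {p. InvSplit p 1 \<in> set tr}"
        hence "evp (InvSplit x 1) \<in> accessing tr" by (intro accI) simp
        thus "x \<in> accessing tr" by simp
      qed
    qed
    have mR: "m (Suc i) \<le> R i" if i1: "1 \<le> i" for i unfolding m_def R_def
    proof (rule card_mono[OF finR])
      show "{p. InvSplit p (Suc i) \<in> set tr} \<subseteq> {p. RespSplit p i Right \<in> set tr}"
      proof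
        fix x assume "x \<in> {p. InvSplit p (Suc i) \<in> set tr}"
        hence "InvSplit x (Suc i) \<in> set tr" by simp
        from F1[OF l1 ex this] i1 show "x \<in> {p. RespSplit p i Right \<in> set tr}" by simp
      qed
    qed
    have Rm: "R i \<le> m i - 1" if "1 \<le> i" "i \<le> l" for i
      using spl_facts(3)[OF spl[OF that]] unfolding R_def m_def .
    have mb: "m i \<le> k + 1 - i" if "1 \<le> i" "i \<le> l" for i
      using that
    proof (induction i)
      case 0 thus ?case by simp
    next
      case (Suc i)
      show ?case
      proof (cases "i = 0")
        case True thus ?thesis using m1 by simp
      next
        case False
        hence i1: "1 \<le> i" by simp
        have "m (Suc i) \<le> R i" using mR[OF i1] .
        also have "\<dots> \<le> m i - 1" using Rm[OF i1] Suc.prems by simp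
        also have "\<dots> \<le> k + 1 - i - 1" using Suc.IH[OF i1] Suc.prems by simp
        finally show ?thesis by simp
      qed
    qed
    have NR: "i < k" if r: "RespSplit p i Right \<in> set tr" for p i
    proof (rule ccontr)
      assume nk: "\<not> i < k"
      have "1 \<le> i" "i \<le> l" using F1[OF l1 ex F2[OF l1 ex r]] by auto
      hence "R i \<le> 0" using Rm[of i] mb[of i] nk by simp
      moreover have "R i > 0" unfolding R_def using r finR[of i Right] by (auto simp: card_gt_0_iff)
      ultimately show False by simp
    qed
    show ?thesis
    proof (intro conjI ballI allI impI)
      fix p j assume pa: "p \<in> accessing tr" and v: "visits l tr p j"
      then obtain n s where n: "n \<le> length tr" "exec l (take n tr) = Some s" "node_of (s p) = Some j"
        unfolding visits_def by blast
      have d: "j = 1 \<or> (\<exists>j'. j \<le> Suc j' \<and> RespSplit p j' Right \<in> set (take n tr))"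
        using F16[OF l1 n(2) n(3)] .
      have k1: "k \<ge> 1" unfolding k_def using pa finA by (auto simp: Suc_le_eq card_gt_0_iff)
      show "j \<le> k"
      proof (cases "j = 1")
        case True thus ?thesis using k1 by simp
      next
        case False
        then obtain j' where "j \<le> Suc j'" "RespSplit p j' Right \<in> set (take n tr)" using d by blast
        moreover have "set (take n tr) \<subseteq> set tr" by (rule set_take_subset)
        ultimately have "j \<le> Suc j'" "RespSplit p j' Right \<in> set tr" by auto
        thus ?thesis using NR by force
      qed
    next
      fix p show "st p \<noteq> FellOff"
      proof
        assume "st p = FellOff"
        hence "RespSplit p l Right \<in> set tr" using F14[OF l1 ex] by blast
        hence "l < k" by (rule NR)
        thus False using kl by simp
      qed
    qed
  qed
  show ?thesis using P1 P2 P3 unfolding k_def by blast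
qed

end
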